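(* Let $f\in\mathbb{Q}[x]$ be a non-zero squarefree polynomial of degree $n$ and let $g\in\mathbb{Q}[x]$ satisfy $g(\xi)>0$ at every real root $\xi$ of $f$. Then there exist polynomials $h_1,\dots,h_n\in\mathbb{Q}[x]$ of degree $<n$ and positive weights $\omega_1,\dots,\omega_n\in\mathbb{Q}_{>0}$ such that $h:=\sum_{i=1}^n\omega_ih_i^2$ satisfies $h\equiv g\pmod f$. *)

theory Defs
  imports Complex_Main "HOL-Computational_Algebra.Polynomial" "HOL-Computational_Algebra.Squarefree"
begin

end

theory Submission
  imports "Berlekamp_Zassenhaus.Square_Free_Int_To_Square_Free_GFp" Defs
begin

hide_const (open) up_ring.coeff up_ring.monom module.smult


interpretation of_rat_poly_hom: map_poly_inj_idom_hom of_rat ..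
interpretation of_real_poly_hom: map_poly_inj_idom_hom of_real ..

lemma of_real_of_rat': "(of_real (of_rat r :: real) :: 'a::real_field) = of_rat r"
  by (cases r) (simp add: of_rat_rat of_real_divide)

lemma sqf_card_roots:
  fixes f :: "rat poly"
  assumes "squarefree f" "f \<noteq> 0"
  shows "card {z::complex. poly (map_poly of_rat f) z = 0} = degree f"
proof -
  have "square_free f"
    unfolding square_free_def
  proof (intro conjI allI impI notI)
    fix q :: "rat poly" assume "degree q > 0" "q * q dvd f"
    then have "is_unit q" using assms(1) unfolding squarefree_def power2_eq_square by blast
    then show False using \<open>degree q > 0\<close> by (simp add: is_unit_iff_degree)
  qed (use assms in auto)
  then have "square_free (map_poly (of_rat :: rat \<Rightarrow> complex) f)"
    by (subst field_hom_0'.square_free_map_poly) (unfold_locales, auto)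
  then have "rsquarefree (map_poly (of_rat :: rat \<Rightarrow> complex) f)"
    by (rule square_free_rsquarefree)
  moreover have "map_poly (of_rat :: rat \<Rightarrow> complex) f \<noteq> 0" using assms by simp
  ultimately show ?thesis using rsquarefree_card_degree by simp
qed

lemma lagrange_exists:
  fixes R :: "complex set"
  assumes "finite R"
  shows "\<exists>U. \<forall>a\<in>R. poly U a = t a"
proof -
  define U where "U = (\<Sum>b\<in>R. smult (t b / (\<Prod>c\<in>R-{b}. (b - c))) (\<Prod>c\<in>R-{b}. [:-c,1:]))"
  have "poly U a = t a" if a: "a \<in> R" for a
  proof -
    have "poly U a = (\<Sum>b\<in>R. t b / (\<Prod>c\<in>R-{b}. (b - c)) * (\<Prod>c\<in>R-{b}. (a - c)))"
      by (simp add: U_def poly_sum poly_prod)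
    also have "\<dots> = (\<Sum>b\<in>{a}. t b / (\<Prod>c\<in>R-{b}. (b - c)) * (\<Prod>c\<in>R-{b}. (a - c)))"
    proof (rule sum.mono_neutral_right)
      show "\<forall>b\<in>R - {a}. t b / (\<Prod>c\<in>R-{b}. (b - c)) * (\<Prod>c\<in>R-{b}. (a - c)) = 0"
        using a assms by (auto simp: prod_zero_iff)
    qed (use a assms in auto)
    also have "\<dots> = t a"
      using assms by (simp add: prod_zero_iff)
    finally show ?thesis .
  qed
  then show ?thesis by blast
qed

lemma realpart_poly:
  fixes R :: "complex set"
  assumes "\<forall>a\<in>R. poly U a = t a" and "\<forall>a\<in>R. cnj a \<in> R \<and> t (cnj a) = cnj (t a)"
  shows "\<exists>u :: real poly. \<forall>a\<in>R. poly (map_poly of_real u) a = t a"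
proof -
  define u where "u = map_poly Re U"
  have eq: "map_poly of_real u = smult (1/2) (U + map_poly cnj U)"
    by (rule poly_eqI) (simp add: u_def coeff_map_poly complex_eq_iff)
  have "poly (map_poly of_real u) a = t a" if "a \<in> R" for a
    using assms that by (simp add: eq)
  then show ?thesis by blast
qed

lemma roots_force_zero:
  fixes r :: "'a::idom poly"
  assumes "finite R" "degree r < card R" "\<forall>a\<in>R. poly r a = 0"
  shows "r = 0"
proof (rule ccontr)
  assume "r \<noteq> 0"
  then have fin: "finite {x. poly r x = 0}" by (rule poly_roots_finite)
  have "card R \<le> card {x. poly r x = 0}" using assms fin by (intro card_mono) auto
  also have "\<dots> \<le> degree r" using card_poly_roots_bound[OF \<open>r \<noteq> 0\<close>] .
  finally show False using assms by simp
qed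



definition qf :: "(nat \<Rightarrow> nat \<Rightarrow> 'a::comm_semiring_1) \<Rightarrow> nat \<Rightarrow> 'a poly" where
  "qf P n = (\<Sum>k<n. \<Sum>l<n. Polynomial.monom (P k l) (k+l))"

lemma coeff_qf: "coeff (qf P n) m = (\<Sum>k<n. \<Sum>l<n. if k+l = m then P k l else 0)"
  by (simp add: qf_def coeff_sum coeff_monom)

lemma coeff_qf_hi: "2*n - 2 < m \<Longrightarrow> coeff (qf P n) m = 0"
  unfolding coeff_qf by (intro sum.neutral ballI) auto

lemma qf_add: "qf (\<lambda>k l. P k l + Q k l) n = qf P n + qf Q n"
  by (simp add: qf_def add_monom[symmetric] sum.distrib)

lemma qf_rank1: "qf (\<lambda>k l. a k * a l) n = (\<Sum>k<n. Polynomial.monom (a k) k)^2"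
  by (simp add: qf_def power2_eq_square sum_product mult_monom)

lemma qf_diag: "qf (\<lambda>k l. if k = l then c else 0) n = (\<Sum>k<n. Polynomial.monom c (2*k))"
proof -
  have "qf (\<lambda>k l. if k = l then c else 0) n = (\<Sum>k<n. \<Sum>l<n. if k = l then Polynomial.monom c (k+l) else 0)"
    unfolding qf_def by (intro sum.cong refl) auto
  also have "\<dots> = (\<Sum>k<n. Polynomial.monom c (2*k))"
    by (simp add: sum.delta mult_2)
  finally show ?thesis .
qed

lemma map_qf: "map_poly (of_rat :: rat \<Rightarrow> 'b::field_char_0) (qf P n) = qf (\<lambda>k l. of_rat (P k l)) n"
  by (rule poly_eqI) (simp add: coeff_map_poly coeff_qf of_rat_sum if_distrib cong: if_cong)

lemma smult_sum_right: "smult c (\<Sum>i\<in>A. f i) = (\<Sum>i\<in>A. smult c (f i))"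
  by (induction A rule: infinite_finite_induct) (auto simp: smult_add_right)

lemma qf_decomp:
  assumes "\<And>k l. k < n \<Longrightarrow> l < n \<Longrightarrow> P k l = (\<Sum>i\<in>I. d i * L i k * L i l)"
  shows "qf P n = (\<Sum>i\<in>I. smult (d i) ((\<Sum>k<n. Polynomial.monom (L i k) k)^2))"
proof -
  have "qf P n = (\<Sum>k<n. \<Sum>l<n. \<Sum>i\<in>I. Polynomial.monom (d i * L i k * L i l) (k+l))"
    unfolding qf_def using assms by (simp add: monom_sum)
  also have "\<dots> = (\<Sum>i\<in>I. \<Sum>k<n. \<Sum>l<n. Polynomial.monom (d i * L i k * L i l) (k+l))"
    by (simp add: sum.swap[of _ I] sum.swap[of _ I "{..<n}"])
  also have "\<dots> = (\<Sum>i\<in>I. smult (d i) ((\<Sum>k<n. Polynomial.monom (L i k) k)^2))"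
    by (intro sum.cong refl)
       (simp add: power2_eq_square sum_product mult_monom smult_sum_right smult_monom mult.assoc)
  finally show ?thesis .
qed

lemma diag_lemma:
  fixes Q :: "nat \<Rightarrow> nat \<Rightarrow> rat"
  assumes "finite I"
  shows "(\<forall>k l. Q k l = Q l k) \<Longrightarrow>
    (\<forall>v. (\<forall>k. k \<notin> I \<longrightarrow> v k = 0) \<longrightarrow> (\<exists>k\<in>I. v k \<noteq> 0) \<longrightarrow> (\<Sum>k\<in>I. \<Sum>l\<in>I. Q k l * v k * v l) > 0)
    \<Longrightarrow> \<exists>d L. (\<forall>i\<in>I. d i > 0) \<and> (\<forall>k\<in>I. \<forall>l\<in>I. Q k l = (\<Sum>i\<in>I. d i * L i k * L i l))"
  using assms
proof (induction I arbitrary: Q rule: finite_induct)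
  case empty
  then show ?case by auto
next
  case (insert a I Q)
  note sym = insert.prems(1) and pd = insert.prems(2)
  define c where "c = Q a a"
  have c0: "c > 0"
  proof -
    have "(\<Sum>k\<in>insert a I. \<Sum>l\<in>insert a I. Q k l * (if k = a then 1 else 0) * (if l = a then 1 else 0)) > 0"
      using pd[rule_format, of "\<lambda>k. if k = a then 1 else 0"] by auto
    moreover have "(\<Sum>k\<in>insert a I. \<Sum>l\<in>insert a I. Q k l * (if k = a then 1 else 0) * (if l = a then 1 else 0)) = Q a a"
    proof -
      have z: "\<And>k. k \<in> I \<Longrightarrow> k \<noteq> a" using insert.hyps by auto
      have "(\<Sum>k\<in>insert a I. \<Sum>l\<in>insert a I. Q k l * (if k = a then 1 else 0) * (if l = a then 1 else 0))
         = (\<Sum>l\<in>insert a I. Q a l * (if l = a then 1 else 0))"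
        using insert.hyps z by (simp add: sum.neutral)
      also have "\<dots> = Q a a" using insert.hyps z by (simp add: sum.neutral)
      finally show ?thesis .
    qed
    ultimately show ?thesis by (simp add: c_def)
  qed
  define Q' where "Q' k l = Q k l - Q a k * Q a l / c" for k l
  have sym': "\<forall>k l. Q' k l = Q' l k" using sym by (auto simp: Q'_def mult.commute)
  have pd': "\<forall>v. (\<forall>k. k \<notin> I \<longrightarrow> v k = 0) \<longrightarrow> (\<exists>k\<in>I. v k \<noteq> 0) \<longrightarrow> (\<Sum>k\<in>I. \<Sum>l\<in>I. Q' k l * v k * v l) > 0"
  proof (intro allI impI)
    fix v :: "nat \<Rightarrow> rat"
    assume v0: "\<forall>k. k \<notin> I \<longrightarrow> v k = 0" and v1: "\<exists>k\<in>I. v k \<noteq> 0"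
    define s where "s = (\<Sum>k\<in>I. Q a k * v k)"
    define w where "w = v(a := - s / c)"
    have wI: "\<And>k. k \<in> I \<Longrightarrow> w k = v k" using insert.hyps by (auto simp: w_def)
    have "(\<Sum>k\<in>insert a I. \<Sum>l\<in>insert a I. Q k l * w k * w l) > 0"
      using pd[rule_format, of w] v0 v1 wI by (auto simp: w_def)
    also have "(\<Sum>k\<in>insert a I. \<Sum>l\<in>insert a I. Q k l * w k * w l)
       = c * w a * w a + 2 * w a * (\<Sum>k\<in>I. Q a k * w k) + (\<Sum>k\<in>I. \<Sum>l\<in>I. Q k l * w k * w l)"
      using insert.hyps sym
      by (simp add: sum.distrib c_def sum_distrib_left sum_distrib_right algebra_simps)
    also have "\<dots> = - s * s / c + (\<Sum>k\<in>I. \<Sum>l\<in>I. Q k l * v k * v l)"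
      using c0 wI by (simp add: s_def w_def field_simps power2_eq_square)
    also have "\<dots> = (\<Sum>k\<in>I. \<Sum>l\<in>I. Q' k l * v k * v l)"
      using c0 by (simp add: Q'_def s_def sum_subtractf sum_product sum_divide_distrib
          algebra_simps sum_distrib_left)
    finally show "(\<Sum>k\<in>I. \<Sum>l\<in>I. Q' k l * v k * v l) > 0" .
  qed
  obtain d L where d: "\<forall>i\<in>I. d i > 0" and L: "\<forall>k\<in>I. \<forall>l\<in>I. Q' k l = (\<Sum>i\<in>I. d i * L i k * L i l)"
    using insert.IH[OF sym' pd'] by blast
  define L2 where "L2 i k = (if i = a then Q a k / c else if k \<in> I then L i k else 0)" for i k
  define d2 where "d2 = d(a := c)"
  show ?case
  proof (intro exI conjI ballI)
    show "i \<in> insert a I \<Longrightarrow> d2 i > 0" for i using d c0 by (auto simp: d2_def)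
  next
    fix k l assume k: "k \<in> insert a I" and l: "l \<in> insert a I"
    have "(\<Sum>i\<in>insert a I. d2 i * L2 i k * L2 i l) = c * (Q a k / c) * (Q a l / c) + (\<Sum>i\<in>I. d i * L2 i k * L2 i l)"
      using insert.hyps by (simp add: d2_def L2_def cong: if_cong) (intro sum.cong, auto)
    also have "\<dots> = Q k l"
    proof (cases "k \<in> I \<and> l \<in> I")
      case True
      then have "(\<Sum>i\<in>I. d i * L2 i k * L2 i l) = Q' k l" using L insert.hyps
        by (auto simp: L2_def intro!: sum.cong)
      then show ?thesis using c0 by (simp add: Q'_def)
    next
      case False
      then have "k = a \<or> l = a" using k l by auto
      moreover have "(\<Sum>i\<in>I. d i * L2 i k * L2 i l) = 0" if "k = a \<or> l = a"
        using that insert.hyps by (auto simp: L2_def intro!: sum.neutral)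
      ultimately show ?thesis using c0 sym by (auto simp: c_def)
    qed
    finally show "Q k l = (\<Sum>i\<in>insert a I. d2 i * L2 i k * L2 i l)" by simp
  qed
qed





theorem mainTheorem6:
  fixes f g :: "rat poly" and n :: nat
  assumes "f \<noteq> 0"
    and "squarefree f"
    and "degree f = n"
    and "\<And>\<xi>::real. poly (map_poly of_rat f) \<xi> = 0 \<Longrightarrow> poly (map_poly of_rat g) \<xi> > 0"
  shows "\<exists>(h :: nat \<Rightarrow> rat poly) (\<omega> :: nat \<Rightarrow> rat).
           (\<forall>i\<in>{1..n}. degree (h i) < n \<and> \<omega> i > 0) \<and>
           (\<Sum>i=1..n. smult (\<omega> i) ((h i)^2)) mod f = g mod f"
proof (cases "n = 0")
  case True
  have "g mod f = 0" using degree_mod_less[of f g] assms(1,3) True by auto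
  then show ?thesis using True by (intro exI[of _ "\<lambda>_. 0"] exI[of _ "\<lambda>_. 1"]) simp
next
  case False
  then have n1: "n \<ge> 1" by simp
  define fR :: "real poly" where "fR = map_poly of_rat f"
  define fC :: "complex poly" where "fC = map_poly of_rat f"
  define g0 where "g0 = g mod f"
  define g0R :: "real poly" where "g0R = map_poly of_rat g0"
  have fR0: "fR \<noteq> 0" using assms(1) by (simp add: fR_def)
  have degfR: "degree fR = n" using assms(3) by (simp add: fR_def)
  have fC_fR: "fC = map_poly of_real fR"
    by (rule poly_eqI) (simp add: fC_def fR_def of_real_of_rat')
  have deg_g0: "degree g0 < n \<or> g0 = 0" using degree_mod_less[of f g] assms(1,3) by (auto simp: g0_def)
  have coeff_g0: "coeff g0 m = 0" if "m \<ge> n" for m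
    using deg_g0 that by (auto intro: coeff_eq_0)
  define Rt where "Rt = {z. poly fC z = 0}"
  have finRt: "finite Rt" unfolding Rt_def using assms(1) by (intro poly_roots_finite) (simp add: fC_def)
  have cardRt: "card Rt = n" unfolding Rt_def fC_def using sqf_card_roots[OF assms(2,1)] assms(3) by simp
  have poly_fC_real: "poly fC (of_real x) = of_real (poly fR x)" for x
    by (simp add: fC_fR)
  have g0pos: "poly g0R x > 0" if "poly fR x = 0" for x
  proof -
    have "g = f * (g div f) + g0" by (simp add: g0_def)
    then have "map_poly (of_rat :: rat \<Rightarrow> real) g = fR * map_poly of_rat (g div f) + g0R"
      by (metis fR_def g0R_def of_rat_poly_hom.hom_add of_rat_poly_hom.hom_mult)
    then have "poly (map_poly of_rat g) x = poly g0R x" using that by simp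
    then show ?thesis using assms(4)[of x] that by (simp add: fR_def)
  qed
  define S :: "real poly" where "S = (\<Sum>k<n. Polynomial.monom 1 (2*k))"
  have polyS: "poly S x \<ge> 1" for x
  proof -
    have "poly S x = (\<Sum>k<n. x ^ (2*k))" by (simp add: S_def poly_sum poly_monom)
    also have "\<dots> \<ge> x ^ (2*0)"
      by (rule member_le_sum) (use n1 in \<open>auto simp: power_mult\<close>)
    finally show ?thesis by simp
  qed
  have Spos: "poly S x > 0" for x using polyS[of x] by linarith
  define RR where "RR = {x::real. poly fR x = 0}"
  have finRR: "finite RR" unfolding RR_def using fR0 by (rule poly_roots_finite)
  define m0 where "m0 = Min (insert 1 ((\<lambda>x. poly g0R x / poly S x) ` RR))"
  have m0pos: "m0 > 0"
    unfolding m0_def using finRR g0pos Spos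
    by (subst Min_gr_iff) (auto simp: RR_def intro!: divide_pos_pos)
  define \<delta> where "\<delta> = m0 / 2"
  have \<delta>pos: "\<delta> > 0" using m0pos by (simp add: \<delta>_def)
  define h where "h = g0R - smult \<delta> S"
  have hpos: "poly h x > 0" if "poly fR x = 0" for x
  proof -
    have Sx: "poly S x > 0" using polyS[of x] by linarith
    have "m0 \<le> poly g0R x / poly S x"
      unfolding m0_def using finRR that by (intro Min_le) (auto simp: RR_def)
    then have "m0 * poly S x \<le> poly g0R x" using Sx by (simp add: pos_le_divide_eq)
    moreover have "\<delta> * poly S x < m0 * poly S x" using m0pos Sx by (simp add: \<delta>_def)
    ultimately have "\<delta> * poly S x < poly g0R x" by linarith
    then show ?thesis by (simp add: h_def)
  qed
  define hC :: "complex poly" where "hC = map_poly of_real h"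
  have hC_real: "\<And>k. coeff hC k \<in> \<real>" by (simp add: hC_def)
  define t where "t a = (if Im a = 0 then of_real (sqrt (poly h (Re a)))
      else if Im a > 0 then csqrt (poly hC a) else cnj (csqrt (poly hC (cnj a))))" for a
  have cnjRt: "cnj a \<in> Rt" if "a \<in> Rt" for a
  proof -
    have "cnj (poly fC a) = poly fC (cnj a)" by (rule poly_cnj_real) (simp add: fC_fR)
    then show ?thesis using that by (simp add: Rt_def)
  qed
  have t_sq: "t a ^ 2 = poly hC a" if "a \<in> Rt" for a
  proof (cases "Im a = 0")
    case True
    then have aeq: "a = of_real (Re a)" by (simp add: complex_eq_iff)
    have "poly fR (Re a) = 0" using that aeq poly_fC_real[of "Re a"] by (simp add: Rt_def)
    then have "poly h (Re a) > 0" by (rule hpos)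
    then have "t a ^ 2 = of_real (poly h (Re a))" using True
      by (simp add: t_def flip: of_real_power)
    also have "\<dots> = poly hC a" by (subst aeq) (simp add: hC_def)
    finally show ?thesis .
  next
    case False
    show ?thesis
    proof (cases "Im a > 0")
      case True then show ?thesis using False by (simp add: t_def)
    next
      case False2: False
      have "t a ^ 2 = cnj (poly hC (cnj a))" using False False2 by (simp add: t_def flip: complex_cnj_power)
      also have "\<dots> = poly hC a" using poly_cnj_real[OF hC_real, of "cnj a"] by simp
      finally show ?thesis .
    qed
  qed
  have t_cnj: "t (cnj a) = cnj (t a)" for a
    by (cases "Im a = 0"; cases "Im a > 0") (simp_all add: t_def)
  obtain U where U: "\<forall>a\<in>Rt. poly U a = t a" using lagrange_exists[OF finRt] by blast
  obtain u :: "real poly" where u: "\<forall>a\<in>Rt. poly (map_poly of_real u) a = t a"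
    using realpart_poly[OF U] cnjRt t_cnj by blast
  define u' where "u' = u mod fR"
  have deg_u': "degree u' \<le> n - 1"
    using degree_mod_less[of fR u] fR0 degfR n1 by (auto simp: u'_def)
  have u'_val: "poly (map_poly of_real u') a = t a" if "a \<in> Rt" for a
  proof -
    have "u = fR * (u div fR) + u'" by (simp add: u'_def)
    then have "map_poly (of_real :: real \<Rightarrow> complex) u = fC * map_poly of_real (u div fR) + map_poly of_real u'"
      by (metis fC_fR of_real_poly_hom.hom_add of_real_poly_hom.hom_mult)
    then show ?thesis using u that by (simp add: Rt_def)
  qed
  define a where "a k = coeff u' k" for k
  define PR where "PR k l = a k * a l + (if k = l then \<delta> else 0)" for k l
  have u'_sum: "(\<Sum>k<n. Polynomial.monom (a k) k) = u'"
  proof -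
    have "{..<n} = {..n-1}" using n1 by auto
    then show ?thesis using poly_as_sum_of_monoms'[OF deg_u'] by (simp add: a_def)
  qed
  have qfPR: "qf PR n = u'^2 + smult \<delta> S"
  proof -
    have "qf PR n = qf (\<lambda>k l. a k * a l) n + qf (\<lambda>k l. if k = l then \<delta> else 0) n"
      unfolding PR_def by (rule qf_add)
    also have "\<dots> = u'^2 + smult \<delta> S"
      by (simp add: qf_rank1 qf_diag u'_sum S_def smult_sum_right smult_monom)
    finally show ?thesis .
  qed
  define D where "D = g0R - qf PR n"
  have D_roots: "poly (map_poly of_real D) a = 0" if "a \<in> Rt" for a
  proof -
    have "map_poly (of_real :: real \<Rightarrow> complex) D = hC - (map_poly of_real u')^2"
      unfolding D_def qfPR hC_def h_def
      by (simp only: of_real_poly_hom.hom_minus of_real_poly_hom.hom_add of_real_poly_hom.hom_power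
          of_real_hom.map_poly_hom_smult) (simp add: algebra_simps)
    then show ?thesis using that u'_val t_sq by simp
  qed
  define qR where "qR = D div fR"
  have D_eq: "D = fR * qR"
  proof -
    define r where "r = D mod fR"
    have Dr: "D = fR * qR + r" by (simp add: qR_def r_def)
    have "map_poly (of_real :: real \<Rightarrow> complex) r = 0"
    proof (rule roots_force_zero[OF finRt])
      have "r = 0 \<or> degree r < n" using degree_mod_less[of fR D] fR0 degfR by (auto simp: r_def)
      then show "degree (map_poly (of_real :: real \<Rightarrow> complex) r) < card Rt"
        using cardRt n1 by auto
      have mD: "map_poly (of_real :: real \<Rightarrow> complex) D = fC * map_poly of_real qR + map_poly of_real r"
        using Dr fC_fR by (metis of_real_poly_hom.hom_add of_real_poly_hom.hom_mult)
      show "\<forall>a\<in>Rt. poly (map_poly of_real r) a = 0"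
      proof
        fix a assume a: "a \<in> Rt"
        have "poly (map_poly of_real D) a = 0" using D_roots[OF a] .
        then show "poly (map_poly of_real r) a = 0" using a mD by (simp add: Rt_def)
      qed
    qed
    then have "r = 0" by simp
    then show ?thesis using Dr by simp
  qed
  have coeff_g0R: "coeff g0R m = 0" if "m \<ge> n" for m
    using coeff_g0[OF that] by (simp add: g0R_def)
  have qR_hi: "coeff qR j = 0" if "j \<ge> n - 1" for j
  proof (cases "qR = 0")
    case False
    have "degree D \<le> 2*n - 2"
    proof (rule degree_le, intro allI impI)
      fix m assume "2*n - 2 < m"
      then have "m \<ge> n" "2*n - 2 < m" using n1 by auto
      then show "coeff D m = 0" by (simp add: D_def coeff_g0R coeff_qf_hi)
    qed
    moreover have "degree D = n + degree qR" using D_eq False fR0 degfR by (simp add: degree_mult_eq)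
    ultimately have "degree qR < j" using that n1 by linarith
    then show ?thesis by (rule coeff_eq_0)
  qed simp
  define F where "F = (\<Sum>i\<le>2*n. \<bar>coeff fR i\<bar>)"
  have F0: "F \<ge> 0" by (simp add: F_def sum_nonneg)
  define K where "K = 1 + real (n*n) + F"
  have K1: "K \<ge> 1" using F0 by (simp add: K_def)
  define \<eta> where "\<eta> = \<delta> / (2 * K * n)"
  have \<eta>pos: "\<eta> > 0" using \<delta>pos K1 n1 by (simp add: \<eta>_def)
  have Kn\<eta>: "K * \<eta> * n = \<delta> / 2" using K1 n1 by (simp add: \<eta>_def field_simps)
  define ra where "ra x = (SOME r. \<bar>of_rat r - x\<bar> < \<eta>)" for x
  have ra: "\<bar>of_rat (ra x) - x\<bar> < \<eta>" for x
  proof -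
    obtain q where "x - \<eta> < of_rat q" "of_rat q < x" using of_rat_dense[of "x - \<eta>" x] \<eta>pos by auto
    then have "\<exists>r. \<bar>of_rat r - x\<bar> < \<eta>" by (intro exI[of _ q]) auto
    then show ?thesis unfolding ra_def by (rule someI_ex)
  qed
  define Pt where "Pt k l = ra (PR k l)" for k l
  define qt where "qt = (\<Sum>j<n-1. Polynomial.monom (ra (coeff qR j)) j)"
  have coeff_qt: "coeff qt j = (if j < n - 1 then ra (coeff qR j) else 0)" for j
    by (simp add: qt_def coeff_sum coeff_monom)
  have qerr: "\<bar>coeff qR j - of_rat (coeff qt j)\<bar> \<le> \<eta>" for j
  proof (cases "j < n - 1")
    case True then show ?thesis using ra[of "coeff qR j"] by (simp add: coeff_qt abs_minus_commute)
  next
    case False then show ?thesis using qR_hi[of j] \<eta>pos by (simp add: coeff_qt)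
  qed
  define e where "e = g0 - qf Pt n - f * qt"
  have coeff_f_hi: "coeff f i = 0" if "i > n" for i using assms(3) that by (simp add: coeff_eq_0)
  have e_hi: "coeff e m = 0" if "m > 2*n - 2" for m
  proof -
    have "coeff (f * qt) m = 0"
      unfolding coeff_mult
    proof (rule sum.neutral, intro ballI)
      fix i assume "i \<in> {..m}"
      show "coeff f i * coeff qt (m - i) = 0"
      proof (cases "i > n")
        case True then show ?thesis by (simp add: coeff_f_hi)
      next
        case False then have "m - i \<ge> n - 1" using that n1 by auto
        then show ?thesis by (simp add: coeff_qt)
      qed
    qed
    moreover have "m \<ge> n" using that n1 by auto
    ultimately show ?thesis using that by (simp add: e_def coeff_g0 coeff_qf_hi)
  qed
  define qtR :: "real poly" where "qtR = map_poly of_rat qt"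
  have map_e: "map_poly (of_rat :: rat \<Rightarrow> real) e = g0R - qf (\<lambda>k l. of_rat (Pt k l)) n - fR * qtR"
    unfolding e_def g0R_def fR_def qtR_def
    by (simp only: of_rat_poly_hom.hom_minus of_rat_poly_hom.hom_mult map_qf)
  have g0R_eq: "g0R = qf PR n + fR * qR" using D_eq by (simp add: D_def algebra_simps)
  have e_bound: "\<bar>of_rat (coeff e m)\<bar> \<le> (real (n*n) + F) * \<eta>" if "m \<le> 2*n - 2" for m
  proof -
    define X1 where "X1 = (\<Sum>k<n. \<Sum>l<n. if k + l = m then PR k l - of_rat (Pt k l) else 0)"
    define X2 where "X2 = (\<Sum>i\<le>m. coeff fR i * (coeff qR (m - i) - coeff qtR (m - i)))"
    have ifd: "\<And>c x y. (if c then x - y else (0::real)) = (if c then x else 0) - (if c then y else 0)"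
      by simp
    have "(of_rat (coeff e m) :: real) = coeff (map_poly of_rat e) m" by simp
    also have "\<dots> = X1 + X2"
      unfolding map_e g0R_eq X1_def X2_def
      using ifd by (simp add: coeff_qf coeff_mult sum_subtractf right_diff_distrib)
    finally have eq: "(of_rat (coeff e m) :: real) = X1 + X2" .
    have "\<bar>X1\<bar> \<le> (\<Sum>k<n. \<Sum>l<n. \<eta>)"
      unfolding X1_def
      by (rule order_trans[OF sum_abs], rule sum_mono, rule order_trans[OF sum_abs], rule sum_mono)
         (use ra \<eta>pos in \<open>auto simp: Pt_def abs_minus_commute less_imp_le\<close>)
    also have "\<dots> = real (n*n) * \<eta>" by simp
    finally have b1: "\<bar>X1\<bar> \<le> real (n*n) * \<eta>" .
    have "\<bar>X2\<bar> \<le> (\<Sum>i\<le>m. \<bar>coeff fR i\<bar> * \<eta>)"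
      unfolding X2_def
      by (rule order_trans[OF sum_abs], rule sum_mono)
         (use qerr in \<open>auto simp: abs_mult qtR_def intro: mult_left_mono\<close>)
    also have "\<dots> = (\<Sum>i\<le>m. \<bar>coeff fR i\<bar>) * \<eta>" by (simp add: sum_distrib_right)
    also have "\<dots> \<le> F * \<eta>"
      unfolding F_def using \<eta>pos that
      by (intro mult_right_mono sum_mono2) auto
    finally have b2: "\<bar>X2\<bar> \<le> F * \<eta>" .
    show ?thesis using eq b1 b2 by (simp add: algebra_simps)
  qed
  define cnt where "cnt m = (\<Sum>k<n. \<Sum>l<n. if k + l = m then 1 else 0 :: rat)" for m
  have cnt1: "cnt m \<ge> 1" if "m \<le> 2*n - 2" for m
  proof -
    define k0 where "k0 = min m (n - 1)"
    have k0: "k0 < n" "m - k0 < n" "k0 + (m - k0) = m" using that n1 by (auto simp: k0_def)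
    have "(1::rat) \<le> (\<Sum>l<n. if k0 + l = m then 1 else 0)"
      using member_le_sum[of "m - k0" "{..<n}" "\<lambda>l. if k0 + l = m then 1 else (0::rat)"] k0 by auto
    also have "\<dots> \<le> cnt m" unfolding cnt_def
      by (rule member_le_sum[of k0 "{..<n}" "\<lambda>k. \<Sum>l<n. if k + l = m then 1 else (0::rat)"])
         (use k0 in \<open>auto intro: sum_nonneg\<close>)
    finally show ?thesis .
  qed
  define E where "E k l = coeff e (k + l) / cnt (k + l)" for k l
  define P where "P k l = Pt k l + E k l" for k l
  have qfE: "qf E n = e"
  proof (rule poly_eqI)
    fix m
    show "coeff (qf E n) m = coeff e m"
    proof (cases "m \<le> 2*n - 2")
      case True
      have "coeff (qf E n) m = (\<Sum>k<n. \<Sum>l<n. (if k + l = m then 1 else 0) * (coeff e m / cnt m))"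
        unfolding coeff_qf by (intro sum.cong refl) (auto simp: E_def)
      also have "\<dots> = cnt m * (coeff e m / cnt m)" by (simp only: cnt_def sum_distrib_right)
      also have "\<dots> = coeff e m" using cnt1[OF True] by simp
      finally show ?thesis .
    next
      case False then show ?thesis by (simp add: coeff_qf_hi e_hi)
    qed
  qed
  have qfP: "qf P n = qf Pt n + e" unfolding P_def qf_add qfE ..
  have g0_eq: "g0 = qf P n + f * qt" using qfP by (simp add: e_def)
  have symP: "\<forall>k l. P k l = P l k"
    by (simp add: P_def Pt_def PR_def E_def add.commute mult.commute)
  have PR_err: "\<bar>of_rat (P k l) - PR k l\<bar> \<le> K * \<eta>" if "k < n" "l < n" for k l
  proof -
    have "k + l \<le> 2*n - 2" using that by auto
    have hE: "\<bar>(of_rat (E k l) :: real)\<bar> \<le> (real (n*n) + F) * \<eta>"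
    proof -
      have c: "(of_rat (cnt (k+l)) :: real) \<ge> 1" using cnt1[OF \<open>k + l \<le> 2*n - 2\<close>]
        by (metis of_rat_1 of_rat_less_eq)
      have "\<bar>(of_rat (E k l) :: real)\<bar> = \<bar>of_rat (coeff e (k+l))\<bar> / of_rat (cnt (k+l))"
        using c by (simp add: E_def of_rat_divide abs_div_pos)
      also have "\<dots> \<le> \<bar>of_rat (coeff e (k+l))\<bar>" using c mult_left_mono[OF c, of "\<bar>of_rat (coeff e (k+l)) :: real\<bar>"] by (simp add: divide_le_eq)
      also have "\<dots> \<le> (real (n*n) + F) * \<eta>" using e_bound[OF \<open>k + l \<le> 2*n - 2\<close>] .
      finally show ?thesis .
    qed
    have hP: "\<bar>of_rat (Pt k l) - PR k l\<bar> \<le> \<eta>" using ra[of "PR k l"] by (simp add: Pt_def)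
    have "(of_rat (P k l) :: real) - PR k l = (of_rat (Pt k l) - PR k l) + of_rat (E k l)"
      by (simp add: P_def of_rat_add)
    also have "\<bar>\<dots>\<bar> \<le> \<bar>of_rat (Pt k l) - PR k l\<bar> + \<bar>of_rat (E k l)\<bar>" by (rule abs_triangle_ineq)
    also have "\<dots> \<le> \<eta> + (real (n*n) + F) * \<eta>" using hE hP by linarith
    also have "\<dots> = K * \<eta>" by (simp add: K_def algebra_simps)
    finally show ?thesis .
  qed
  have pd: "\<forall>v. (\<forall>k. k \<notin> {..<n} \<longrightarrow> v k = 0) \<longrightarrow> (\<exists>k\<in>{..<n}. v k \<noteq> 0) \<longrightarrow>
      (\<Sum>k\<in>{..<n}. \<Sum>l\<in>{..<n}. P k l * v k * v l) > 0"
  proof (intro allI impI)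
    fix v :: "nat \<Rightarrow> rat"
    assume "\<exists>k\<in>{..<n}. v k \<noteq> 0"
    then obtain k0 where k0: "k0 < n" "v k0 \<noteq> 0" by auto
    define w where "w k = (of_rat (v k) :: real)" for k
    define W where "W = (\<Sum>k<n. w k ^ 2)"
    have Wpos: "W > 0"
    proof -
      have "w k0 ^ 2 > 0" using k0 by (simp add: w_def)
      also have "w k0 ^ 2 \<le> W" unfolding W_def using k0 by (intro member_le_sum) auto
      finally show ?thesis .
    qed
    have A1: "(\<Sum>k<n. \<Sum>l<n. PR k l * w k * w l) \<ge> \<delta> * W"
    proof -
      have "(\<Sum>k<n. \<Sum>l<n. PR k l * w k * w l)
          = (\<Sum>k<n. \<Sum>l<n. (a k * w k) * (a l * w l) + (if k = l then \<delta> * w k * w l else 0))"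
        by (intro sum.cong refl) (simp add: PR_def algebra_simps)
      also have "\<dots> = (\<Sum>k<n. \<Sum>l<n. (a k * w k) * (a l * w l)) + (\<Sum>k<n. \<Sum>l<n. (if k = l then \<delta> * w k * w l else 0))"
        by (simp only: sum.distrib)
      also have "\<dots> = (\<Sum>k<n. a k * w k)^2 + \<delta> * W"
        by (simp only: power2_eq_square sum_product W_def) (simp add: sum_distrib_left mult.assoc)
      also have "\<dots> \<ge> \<delta> * W" by simp
      finally show ?thesis .
    qed
    have A3: "\<bar>\<Sum>k<n. \<Sum>l<n. (of_rat (P k l) - PR k l) * w k * w l\<bar> \<le> K * \<eta> * n * W"
    proof -
      have "\<bar>\<Sum>k<n. \<Sum>l<n. (of_rat (P k l) - PR k l) * w k * w l\<bar>
          \<le> (\<Sum>k<n. \<Sum>l<n. K * \<eta> * ((w k ^ 2 + w l ^ 2) / 2))"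
      proof (rule order_trans[OF sum_abs], rule sum_mono, rule order_trans[OF sum_abs], rule sum_mono)
        fix k l assume kl: "k \<in> {..<n}" "l \<in> {..<n}"
        have "\<bar>(of_rat (P k l) - PR k l) * w k * w l\<bar> = \<bar>of_rat (P k l) - PR k l\<bar> * (\<bar>w k\<bar> * \<bar>w l\<bar>)"
          by (simp add: abs_mult)
        also have "\<dots> \<le> (K * \<eta>) * ((w k ^ 2 + w l ^ 2) / 2)"
        proof (rule mult_mono)
          have "0 \<le> (\<bar>w k\<bar> - \<bar>w l\<bar>)^2" by simp
          then have "0 \<le> w k ^ 2 + w l ^ 2 - 2 * (\<bar>w k\<bar> * \<bar>w l\<bar>)"
            by (simp only: power2_diff power2_abs mult.assoc)
          then show "\<bar>w k\<bar> * \<bar>w l\<bar> \<le> (w k ^ 2 + w l ^ 2) / 2" by (simp add: field_simps)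
        qed (use PR_err kl K1 \<eta>pos in auto)
        finally show "\<bar>(of_rat (P k l) - PR k l) * w k * w l\<bar> \<le> K * \<eta> * ((w k ^ 2 + w l ^ 2) / 2)" by simp
      qed
      also have "\<dots> = (K * \<eta> / 2) * (\<Sum>k<n. \<Sum>l<n. (w k ^ 2 + w l ^ 2))"
        by (simp add: sum_distrib_left)
      also have "(\<Sum>k<n. \<Sum>l<n. (w k ^ 2 + w l ^ 2)) = 2 * n * W"
        by (simp add: sum.distrib W_def sum_distrib_left[symmetric])
      also have "(K * \<eta> / 2) * (2 * n * W) = K * \<eta> * n * W" by simp
      finally show ?thesis .
    qed
    have "(of_rat (\<Sum>k\<in>{..<n}. \<Sum>l\<in>{..<n}. P k l * v k * v l) :: real)
        = (\<Sum>k<n. \<Sum>l<n. PR k l * w k * w l) + (\<Sum>k<n. \<Sum>l<n. (of_rat (P k l) - PR k l) * w k * w l)"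
    proof -
      have "(of_rat (\<Sum>k\<in>{..<n}. \<Sum>l\<in>{..<n}. P k l * v k * v l) :: real)
          = (\<Sum>k<n. \<Sum>l<n. of_rat (P k l) * w k * w l)"
        by (simp add: of_rat_sum of_rat_mult w_def)
      also have "\<dots> = (\<Sum>k<n. \<Sum>l<n. PR k l * w k * w l + (of_rat (P k l) - PR k l) * w k * w l)"
        by (intro sum.cong refl) (simp add: algebra_simps)
      also have "\<dots> = (\<Sum>k<n. \<Sum>l<n. PR k l * w k * w l) + (\<Sum>k<n. \<Sum>l<n. (of_rat (P k l) - PR k l) * w k * w l)"
        by (simp only: sum.distrib)
      finally show ?thesis .
    qed
    also have "\<dots> \<ge> \<delta> * W - K * \<eta> * n * W" using A1 A3 by linarith
    finally have X: "(of_rat (\<Sum>k\<in>{..<n}. \<Sum>l\<in>{..<n}. P k l * v k * v l) :: real) \<ge> \<delta> * W - K * \<eta> * n * W" .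
    have "K * \<eta> * n * W = \<delta> / 2 * W" using Kn\<eta> by simp
    moreover have "\<delta> / 2 * W > 0" using \<delta>pos Wpos by simp
    ultimately have "(0::real) < of_rat (\<Sum>k\<in>{..<n}. \<Sum>l\<in>{..<n}. P k l * v k * v l)" using X by linarith
    then show "(\<Sum>k\<in>{..<n}. \<Sum>l\<in>{..<n}. P k l * v k * v l) > 0" by simp
  qed
  obtain d L where d: "\<forall>i\<in>{..<n}. d i > 0"
    and L: "\<forall>k\<in>{..<n}. \<forall>l\<in>{..<n}. P k l = (\<Sum>i\<in>{..<n}. d i * L i k * L i l)"
    using diag_lemma[OF finite_lessThan symP pd] by blast
  define H where "H i = (\<Sum>k<n. Polynomial.monom (L i k) k)" for i
  have qfP_dec: "qf P n = (\<Sum>i<n. smult (d i) ((H i)^2))"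
    unfolding H_def by (rule qf_decomp) (use L in auto)
  have degH: "degree (H i) < n" for i
  proof -
    have "degree (H i) \<le> n - 1"
      by (rule degree_le) (auto simp: H_def coeff_sum coeff_monom)
    then show ?thesis using n1 by linarith
  qed
  have modP: "qf P n mod f = g mod f"
  proof -
    have "qf P n = g0 + (- qt) * f" using g0_eq by (simp add: algebra_simps)
    then have "qf P n mod f = g0 mod f" by (simp only: mod_mult_self1)
    then show ?thesis by (simp add: g0_def)
  qed
  show ?thesis
  proof (intro exI[of _ "\<lambda>i. H (i - 1)"] exI[of _ "\<lambda>i. d (i - 1)"] conjI ballI)
    fix i assume "i \<in> {1..n}"
    then show "degree (H (i - 1)) < n" "d (i - 1) > 0" using degH d by auto
  next
    have "(\<Sum>i=1..n. smult (d (i - 1)) ((H (i - 1))^2)) = (\<Sum>i<n. smult (d i) ((H i)^2))"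
      by (simp add: sum.atLeast1_atMost_eq)
    then show "(\<Sum>i=1..n. smult (d (i - 1)) ((H (i - 1))^2)) mod f = g mod f"
      using qfP_dec modP by simp
  qed
qed


end
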